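(* Let $\mathcal{C}$ be a class of ontologies, $D$ a database, $\Pi=(\Sigma_{hg},\Sigma_{\mathcal{C}})$ a $\mathcal{C}$-dyadic pair of TGDs, and $q(\mathbf{x})$ a conjunctive query. Let $D^{+}=D\cup\mathrm{grAt}(D,\Pi)$. Then $\mathrm{cert}(q,D,\Sigma_{hg}\cup\Sigma_{\mathcal{C}})=\mathrm{cert}(q,D^{+},\Sigma_{\mathcal{C}})$.
   Context: Standard setting: constants, nulls, variables; atoms, databases (finite sets of facts), instances. A TGD is $\sigma:\Phi(\mathbf{x},\mathbf{y})\to\exists\mathbf{z}\,\Psi(\mathbf{x},\mathbf{z})$; $\mathbf{z}$ are existential variables, $\mathbf{x}=\mathrm{front}(\sigma)$ frontier variables; an ontology is a finite set of TGDs; a datalog rule is a TGD without existential variables and with a single head atom; $\mathsf{Datalog}$ is the class of ontologies of datalog rules. Certain answers $\mathrm{cert}(q,D,\Sigma)$ of a CQ $q$ is the intersection of $q(M)$ over all models $M\supseteq D$ of $\Sigma$. $\mathrm{chase}(D,\Sigma)$ is the (unique, nulls determined by triggers) result of the chase, a universal model. $\mathrm{hdpred}(\Sigma)$ / $\mathrm{bdpred}(\Sigma)$ denote the predicates occurring in heads / bodies of rules of $\Sigma$. Positions: $P[i]$ is the $i$-th argument position of predicate $P$. For an ontology $\Sigma$ and existential variable $z$ of $\Sigma$, a position $\pi$ is $z$-affected if either some rule has $z$ in its head at $\pi$, or some rule has a frontier variable $x$ occurring in its head at $\pi$ and occurring in its body only at $z$-affected positions. $\mathrm{aff}(\pi)$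 is the set of existential variables $z$ such that $\pi$ is $z$-affected. A body variable $x$ of a rule, occurring in the body at positions $\pi_1,\dots,\pi_n$, is harmless if $\bigcap_i\mathrm{aff}(\pi_i)=\emptyset$, otherwise harmful; a harmful frontier variable is dangerous. A set $\Sigma'\subseteq\Sigma$ is head-ground w.r.t. $\Sigma$ if: (1) $\Sigma'\in\mathsf{Datalog}$; (2) every head atom of $\Sigma'$ contains only variables that are harmless w.r.t. $\Sigma$; (3) $\mathrm{hdpred}(\Sigma')\cap\mathrm{bdpred}(\Sigma')=\emptyset$; (4) $\mathrm{hdpred}(\Sigma')\cap\mathrm{hdpred}(\Sigma\setminus\Sigma')=\emptyset$. A pair $\Pi=(\Sigma_{hg},\Sigma_{\mathcal{C}})$ of ontologies is $\mathcal{C}$-dyadic if $\Sigma_{hg}$ is head-ground w.r.t. $\Sigma_{hg}\cup\Sigma_{\mathcal{C}}$ and $\Sigma_{\mathcal{C}}\in\mathcal{C}$. Define $\mathrm{grAt}(D,\Pi)=\{a\in\mathrm{chase}(D,\Sigma_{hg}\cup\Sigma_{\mathcal{C}}) : \text{the predicate of } a \text{ is in } \mathrm{hdpred}(\Sigma_{hg})\}$. *)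

theory Defs
  imports Main
begin

(* An atom P(t_1,...,t_n): a predicate together with its argument list.
   Argument positions are indexed from 0 (position (P,i) is the (i+1)-th argument). *)
datatype ('p, 'a) atom = Atom (pred: 'p) (args: "'a list")

(* A TGD  body(x,y) -> exists z. head(x,z); rule atoms contain variables only. *)
datatype ('p, 'v) tgd = TGD (body: "('p, 'v) atom set") (head: "('p, 'v) atom set")

definition atomvars :: "('p, 'v) atom set \<Rightarrow> 'v set" where
  "atomvars A = (\<Union>a\<in>A. set (args a))"

definition bodyvars :: "('p, 'v) tgd \<Rightarrow> 'v set" where
  "bodyvars \<sigma> = atomvars (body \<sigma>)"

definition headvars :: "('p, 'v) tgd \<Rightarrow> 'v set" where
  "headvars \<sigma> = atomvars (head \<sigma>)"

definition front :: "('p, 'v) tgd \<Rightarrow> 'v set" where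
  "front \<sigma> = bodyvars \<sigma> \<inter> headvars \<sigma>"

definition exvars :: "('p, 'v) tgd \<Rightarrow> 'v set" where
  "exvars \<sigma> = headvars \<sigma> - bodyvars \<sigma>"

definition wf_tgd :: "('p, 'v) tgd \<Rightarrow> bool" where
  "wf_tgd \<sigma> \<longleftrightarrow> finite (body \<sigma>) \<and> finite (head \<sigma>) \<and> head \<sigma> \<noteq> {}"

definition ontology :: "('p, 'v) tgd set \<Rightarrow> bool" where
  "ontology \<Sigma> \<longleftrightarrow> finite \<Sigma> \<and> (\<forall>\<sigma>\<in>\<Sigma>. wf_tgd \<sigma>)"

definition datalog_rule :: "('p, 'v) tgd \<Rightarrow> bool" where
  "datalog_rule \<sigma> \<longleftrightarrow> exvars \<sigma> = {} \<and> (\<exists>a. head \<sigma> = {a})"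

definition Datalog :: "('p, 'v) tgd set set" where
  "Datalog = {\<Sigma>. ontology \<Sigma> \<and> (\<forall>\<sigma>\<in>\<Sigma>. datalog_rule \<sigma>)}"

definition hdpred :: "('p, 'v) tgd set \<Rightarrow> 'p set" where
  "hdpred \<Sigma> = (\<Union>\<sigma>\<in>\<Sigma>. pred ` head \<sigma>)"

definition bdpred :: "('p, 'v) tgd set \<Rightarrow> 'p set" where
  "bdpred \<Sigma> = (\<Union>\<sigma>\<in>\<Sigma>. pred ` body \<sigma>)"

(* conjunctive query q(x) = exists y. phi(x,y): answer variables and atoms *)
datatype ('p, 'v) cq = CQ (ansvars: "'v list") (qatoms: "('p, 'v) atom set")

definition wf_cq :: "('p, 'v) cq \<Rightarrow> bool" where
  "wf_cq q \<longleftrightarrow> finite (qatoms q) \<and> set (ansvars q) \<subseteq> atomvars (qatoms q)"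

(* Nulls are named by the chase trigger that
   creates them: the rule, the existential variable, and the trigger's homomorphism
   restricted to the body variables. *)
datatype ('p, 'c, 'v) "term" =
    Const 'c
  | Null "('p, 'v) tgd" 'v "'v \<Rightarrow> ('p, 'c, 'v) term option"

type_synonym ('p, 'c, 'v) inst = "('p, ('p, 'c, 'v) term) atom set"

definition inst_atom :: "('v \<Rightarrow> 'b) \<Rightarrow> ('p, 'v) atom \<Rightarrow> ('p, 'b) atom" where
  "inst_atom h a = Atom (pred a) (map h (args a))"

definition database :: "('p, 'c, 'v) inst \<Rightarrow> bool" where
  "database D \<longleftrightarrow> finite D \<and> (\<forall>a\<in>D. \<forall>t\<in>set (args a). \<exists>c. t = Const c)"

definition satisfies :: "('p, 'c, 'v) inst \<Rightarrow> ('p, 'v) tgd \<Rightarrow> bool" where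
  "satisfies M \<sigma> \<longleftrightarrow>
     (\<forall>h. (\<forall>a\<in>body \<sigma>. inst_atom h a \<in> M) \<longrightarrow>
          (\<exists>h'. (\<forall>x\<in>front \<sigma>. h' x = h x) \<and> (\<forall>a\<in>head \<sigma>. inst_atom h' a \<in> M)))"

definition is_model :: "('p, 'c, 'v) inst \<Rightarrow> ('p, 'v) tgd set \<Rightarrow> ('p, 'c, 'v) inst \<Rightarrow> bool" where
  "is_model D \<Sigma> M \<longleftrightarrow> D \<subseteq> M \<and> (\<forall>\<sigma>\<in>\<Sigma>. satisfies M \<sigma>)"

definition answers :: "('p, 'v) cq \<Rightarrow> ('p, 'c, 'v) inst \<Rightarrow> 'c list set" where
  "answers q M = {cs. length cs = length (ansvars q) \<and>
      (\<exists>h. (\<forall>i<length cs. h (ansvars q ! i) = Const (cs ! i)) \<and>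
           (\<forall>a\<in>qatoms q. inst_atom h a \<in> M))}"

definition cert :: "('p, 'v) cq \<Rightarrow> ('p, 'c, 'v) inst \<Rightarrow> ('p, 'v) tgd set \<Rightarrow> 'c list set" where
  "cert q D \<Sigma> = (\<Inter>{answers q M | M. is_model D \<Sigma> M})"

definition skolem_ext :: "('p, 'v) tgd \<Rightarrow> ('v \<Rightarrow> ('p, 'c, 'v) term) \<Rightarrow> 'v \<Rightarrow> ('p, 'c, 'v) term" where
  "skolem_ext \<sigma> h v =
     (if v \<in> exvars \<sigma>
      then Null \<sigma> v (\<lambda>u. if u \<in> bodyvars \<sigma> then Some (h u) else None)
      else h v)"

inductive_set chase :: "('p, 'c, 'v) inst \<Rightarrow> ('p, 'v) tgd set \<Rightarrow> ('p, 'c, 'v) inst"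
  for D :: "('p, 'c, 'v) inst" and \<Sigma> :: "('p, 'v) tgd set" where
  base: "a \<in> D \<Longrightarrow> a \<in> chase D \<Sigma>"
| step: "\<lbrakk>\<sigma> \<in> \<Sigma>; \<forall>b\<in>body \<sigma>. inst_atom h b \<in> chase D \<Sigma>; a \<in> head \<sigma>\<rbrakk>
         \<Longrightarrow> inst_atom (skolem_ext \<sigma> h) a \<in> chase D \<Sigma>"

type_synonym 'p position = "'p \<times> nat"

(* affected \<Sigma> (\<tau>, z) \<pi>: position \<pi> is z-affected, where z is the existential
   variable z of rule \<tau> \<in> \<Sigma> *)
inductive affected :: "('p, 'v) tgd set \<Rightarrow> ('p, 'v) tgd \<times> 'v \<Rightarrow> 'p position \<Rightarrow> bool"
  for \<Sigma> :: "('p, 'v) tgd set" where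
  ex: "\<lbrakk>\<tau> \<in> \<Sigma>; z \<in> exvars \<tau>; a \<in> head \<tau>; i < length (args a); args a ! i = z\<rbrakk>
       \<Longrightarrow> affected \<Sigma> (\<tau>, z) (pred a, i)"
| propagate: "\<lbrakk>\<sigma> \<in> \<Sigma>; x \<in> front \<sigma>; a \<in> head \<sigma>; i < length (args a); args a ! i = x;
          \<forall>b\<in>body \<sigma>. \<forall>j<length (args b). args b ! j = x \<longrightarrow> affected \<Sigma> e (pred b, j)\<rbrakk>
       \<Longrightarrow> affected \<Sigma> e (pred a, i)"

definition aff :: "('p, 'v) tgd set \<Rightarrow> 'p position \<Rightarrow> (('p, 'v) tgd \<times> 'v) set" where
  "aff \<Sigma> \<pi> = {e. affected \<Sigma> e \<pi>}"

definition bodypos :: "('p, 'v) tgd \<Rightarrow> 'v \<Rightarrow> 'p position set" where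
  "bodypos \<sigma> x = {(pred b, j) | b j. b \<in> body \<sigma> \<and> j < length (args b) \<and> args b ! j = x}"

definition harmless :: "('p, 'v) tgd set \<Rightarrow> ('p, 'v) tgd \<Rightarrow> 'v \<Rightarrow> bool" where
  "harmless \<Sigma> \<sigma> x \<longleftrightarrow> x \<in> bodyvars \<sigma> \<and> (\<Inter>\<pi>\<in>bodypos \<sigma> x. aff \<Sigma> \<pi>) = {}"

definition head_ground :: "('p, 'v) tgd set \<Rightarrow> ('p, 'v) tgd set \<Rightarrow> bool" where
  "head_ground \<Sigma>' \<Sigma> \<longleftrightarrow>
     \<Sigma>' \<subseteq> \<Sigma> \<and>
     \<Sigma>' \<in> Datalog \<and>
     (\<forall>\<sigma>\<in>\<Sigma>'. \<forall>a\<in>head \<sigma>. \<forall>x\<in>set (args a). harmless \<Sigma> \<sigma> x) \<and>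
     hdpred \<Sigma>' \<inter> bdpred \<Sigma>' = {} \<and>
     hdpred \<Sigma>' \<inter> hdpred (\<Sigma> - \<Sigma>') = {}"

definition dyadic :: "('p, 'v) tgd set set \<Rightarrow> ('p, 'v) tgd set \<times> ('p, 'v) tgd set \<Rightarrow> bool" where
  "dyadic \<C> \<Pi> \<longleftrightarrow> head_ground (fst \<Pi>) (fst \<Pi> \<union> snd \<Pi>) \<and> snd \<Pi> \<in> \<C>"

definition grAt :: "('p, 'c, 'v) inst \<Rightarrow> ('p, 'v) tgd set \<times> ('p, 'v) tgd set \<Rightarrow> ('p, 'c, 'v) inst" where
  "grAt D \<Pi> = {a \<in> chase D (fst \<Pi> \<union> snd \<Pi>). pred a \<in> hdpred (fst \<Pi>)}"

end

theory Submission
  imports Defs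
begin

definition W :: "('p, 'c, 'v) inst \<Rightarrow> ('p, 'v) tgd \<Rightarrow> ('v \<Rightarrow> ('p, 'c, 'v) term option) \<Rightarrow> 'v \<Rightarrow> ('p, 'c, 'v) term" where
  "W M \<sigma> fo = (SOME h'. (\<forall>x\<in>front \<sigma>. Some (h' x) = fo x) \<and> (\<forall>a\<in>head \<sigma>. inst_atom h' a \<in> M))"

primrec G :: "('p, 'c, 'v) inst \<Rightarrow> ('p, 'c, 'v) term \<Rightarrow> ('p, 'c, 'v) term" where
  "G M (Const c) = Const c"
| "G M (Null \<sigma> z f) = W M \<sigma> (map_option (G M) \<circ> f) z"

lemma inst_comp: "inst_atom g (inst_atom h a) = inst_atom (g \<circ> h) a"
  by (simp add: inst_atom_def)

lemma front_sub: "v \<in> headvars \<sigma> \<Longrightarrow> v \<notin> exvars \<sigma> \<Longrightarrow> v \<in> front \<sigma>"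
  by (auto simp: exvars_def front_def)

lemma chase_affected:
  assumes "a \<in> chase D \<Sigma>" "database D"
  shows "i < length (args a) \<Longrightarrow> args a ! i = Null \<tau> z f \<Longrightarrow> affected \<Sigma> (\<tau>, z) (pred a, i)"
  using assms(1) 
proof (induction arbitrary: i \<tau> z f rule: chase.induct)
  case (base a)
  then show ?case using assms(2) unfolding database_def
    by (metis nth_mem term.distinct(1))
next
  case (step \<sigma> h a)
  define v where "v = args a ! i"
  have il: "i < length (args a)" using step.prems by (simp add: inst_atom_def)
  have sk: "skolem_ext \<sigma> h v = Null \<tau> z f" using step.prems il by (simp add: inst_atom_def v_def)
  have pa: "pred (inst_atom (skolem_ext \<sigma> h) a) = pred a" by (simp add: inst_atom_def)
  show ?case
  proof (cases "v \<in> exvars \<sigma>")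
    case True
    then have "\<tau> = \<sigma>" "z = v" using sk by (auto simp: skolem_ext_def)
    then show ?thesis unfolding pa using affected.ex[OF step.hyps(1) True step.hyps(2) il] v_def by simp
  next
    case False
    have hv: "h v = Null \<tau> z f" using sk False by (simp add: skolem_ext_def)
    have "v \<in> headvars \<sigma>" using step.hyps(2) il unfolding headvars_def atomvars_def v_def
      by (auto intro: nth_mem)
    then have fr: "v \<in> front \<sigma>" using False front_sub by metis
    have "\<forall>b\<in>body \<sigma>. \<forall>j<length (args b). args b ! j = v \<longrightarrow> affected \<Sigma> (\<tau>, z) (pred b, j)"
    proof (intro ballI allI impI)
      fix b j assume b: "b \<in> body \<sigma>" and j: "j < length (args b)" and e: "args b ! j = v"
      have ih: "\<And>i \<tau> z f. i < length (args (inst_atom h b)) \<Longrightarrow> args (inst_atom h b) ! i = Null \<tau> z f \<Longrightarrow> affected \<Sigma> (\<tau>, z) (pred (inst_atom h b), i)"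
        using step.IH b by blast
      have "affected \<Sigma> (\<tau>, z) (pred (inst_atom h b), j)"
        using ih[of j \<tau> z f] j e hv by (simp add: inst_atom_def)
      then show "affected \<Sigma> (\<tau>, z) (pred b, j)" by (simp add: inst_atom_def)
    qed
    then show ?thesis unfolding pa using affected.propagate[OF step.hyps(1) fr step.hyps(2) il] v_def by simp
  qed
qed

lemma harmless_notnull:
  assumes "database D" "harmless \<Sigma> \<sigma> x" "\<forall>b\<in>body \<sigma>. inst_atom h b \<in> chase D \<Sigma>"
  shows "\<exists>c. h x = Const c"
proof (cases "h x")
  case (Const c) then show ?thesis by simp
next
  case (Null \<tau> z f)
  have "(\<tau>, z) \<in> (\<Inter>\<pi>\<in>bodypos \<sigma> x. aff \<Sigma> \<pi>)"
  proof
    fix \<pi> assume "\<pi> \<in> bodypos \<sigma> x"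
    then obtain b j where b: "b \<in> body \<sigma>" "j < length (args b)" "args b ! j = x" "\<pi> = (pred b, j)"
      unfolding bodypos_def by blast
    have "affected \<Sigma> (\<tau>, z) (pred (inst_atom h b), j)"
      using chase_affected[OF assms(3)[rule_format, OF b(1)] assms(1), of j \<tau> z f] b Null
      by (simp add: inst_atom_def)
    then show "(\<tau>, z) \<in> aff \<Sigma> \<pi>" using b by (simp add: aff_def inst_atom_def)
  qed
  then show ?thesis using assms(2) unfolding harmless_def by blast
qed

lemma hg_const:
  assumes "database D" "head_ground S \<Sigma>" "a \<in> chase D \<Sigma>" "pred a \<in> hdpred S"
  shows "\<forall>t\<in>set (args a). \<exists>c. t = Const c"
  using assms(3)
proof (cases rule: chase.cases)
  case base then show ?thesis using assms(1) unfolding database_def by blast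
next
  case (step \<sigma> h a')
  have "pred a' = pred a" using step by (simp add: inst_atom_def)
  then have p: "pred a' \<in> hdpred S" using assms(4) by simp
  have "\<sigma> \<in> S"
  proof (rule ccontr)
    assume "\<sigma> \<notin> S"
    then have "pred a' \<in> hdpred (\<Sigma> - S)" using step unfolding hdpred_def by blast
    then show False using p assms(2) unfolding head_ground_def by blast
  qed
  then have dl: "datalog_rule \<sigma>" and hl: "\<forall>x\<in>set (args a'). harmless \<Sigma> \<sigma> x"
    using assms(2) step unfolding head_ground_def Datalog_def by auto
  have ex: "exvars \<sigma> = {}" using dl by (simp add: datalog_rule_def)
  show ?thesis
  proof
    fix t assume "t \<in> set (args a)"
    then obtain x where x: "x \<in> set (args a')" "t = skolem_ext \<sigma> h x"
      using step by (auto simp: inst_atom_def)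
    then have "t = h x" using ex by (simp add: skolem_ext_def)
    then show "\<exists>c. t = Const c" using harmless_notnull[OF assms(1) hl[rule_format, OF x(1)]] step by blast
  qed
qed

lemma G_const: "\<forall>t\<in>set (args a). \<exists>c. t = Const c \<Longrightarrow> inst_atom (G M) a = a"
proof -
  assume "\<forall>t\<in>set (args a). \<exists>c. t = Const c"
  then have "map (G M) (args a) = args a" by (intro map_idI) auto
  then show ?thesis by (simp add: inst_atom_def)
qed

lemma hom:
  assumes "database D" "D \<subseteq> M" "\<forall>\<sigma>\<in>\<Sigma> - T. satisfies M \<sigma>"
    and "\<forall>\<sigma>\<in>T. \<forall>h a. (\<forall>b\<in>body \<sigma>. inst_atom h b \<in> chase D \<Sigma>) \<and> a \<in> head \<sigma> \<longrightarrow>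
          inst_atom (skolem_ext \<sigma> h) a \<in> M \<and> (\<forall>t\<in>set (args (inst_atom (skolem_ext \<sigma> h) a)). \<exists>c. t = Const c)"
    and "a \<in> chase D \<Sigma>"
  shows "inst_atom (G M) a \<in> M"
  using assms(5)
proof (induction rule: chase.induct)
  case (base a)
  then have "\<forall>t\<in>set (args a). \<exists>c. t = Const c" using assms(1) unfolding database_def by blast
  then have "inst_atom (G M) a = a" by (rule G_const)
  then show ?case using base assms(2) by auto
next
  case (step \<sigma> h a)
  show ?case
  proof (cases "\<sigma> \<in> T")
    case True
    then have c: "inst_atom (skolem_ext \<sigma> h) a \<in> M \<and> (\<forall>t\<in>set (args (inst_atom (skolem_ext \<sigma> h) a)). \<exists>c. t = Const c)"
      using assms(4) step.IH step.hyps(2) by blast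
    then have "inst_atom (G M) (inst_atom (skolem_ext \<sigma> h) a) = inst_atom (skolem_ext \<sigma> h) a" by (intro G_const) blast
    then show ?thesis using c by simp
  next
    case False
    then have sat: "satisfies M \<sigma>" using assms(3) step.hyps(1) by blast
    have bm: "\<forall>b\<in>body \<sigma>. inst_atom (G M \<circ> h) b \<in> M" using step.IH by (simp add: inst_comp)
    define f where "f = (\<lambda>u. if u \<in> bodyvars \<sigma> then Some (h u) else None)"
    define fo where "fo = map_option (G M) \<circ> f"
    obtain h' where h': "\<forall>x\<in>front \<sigma>. h' x = (G M \<circ> h) x" "\<forall>a\<in>head \<sigma>. inst_atom h' a \<in> M"
      using sat bm unfolding satisfies_def by blast
    have "\<exists>h'. (\<forall>x\<in>front \<sigma>. Some (h' x) = fo x) \<and> (\<forall>a\<in>head \<sigma>. inst_atom h' a \<in> M)"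
      using h' by (intro exI[of _ h']) (auto simp: fo_def f_def front_def)
    then have W: "(\<forall>x\<in>front \<sigma>. Some (W M \<sigma> fo x) = fo x) \<and> (\<forall>a\<in>head \<sigma>. inst_atom (W M \<sigma> fo) a \<in> M)"
      unfolding W_def by (rule someI_ex)
    have eq: "G M (skolem_ext \<sigma> h v) = W M \<sigma> fo v" if v: "v \<in> set (args a)" for v
    proof (cases "v \<in> exvars \<sigma>")
      case True
      then show ?thesis by (simp add: skolem_ext_def fo_def f_def)
    next
      case False
      have "v \<in> headvars \<sigma>" using v step.hyps(2) unfolding headvars_def atomvars_def by blast
      then have fr: "v \<in> front \<sigma>" using False front_sub by metis
      then have "Some (W M \<sigma> fo v) = Some (G M (h v))" using W by (auto simp: fo_def f_def front_def)
      then show ?thesis using False by (simp add: skolem_ext_def)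
    qed
    have "inst_atom (G M) (inst_atom (skolem_ext \<sigma> h) a) = inst_atom (W M \<sigma> fo) a"
      using eq by (simp add: inst_atom_def)
    then show ?thesis using W step.hyps(2) by simp
  qed
qed

lemma chase_model: "is_model D \<Sigma> (chase D \<Sigma>)"
  unfolding is_model_def satisfies_def
proof (intro conjI subsetI ballI allI impI)
  fix a assume "a \<in> D" then show "a \<in> chase D \<Sigma>" by (rule chase.base)
next
  fix \<sigma> h assume s: "\<sigma> \<in> \<Sigma>" and b: "\<forall>a\<in>body \<sigma>. inst_atom h a \<in> chase D \<Sigma>"
  show "\<exists>h'. (\<forall>x\<in>front \<sigma>. h' x = h x) \<and> (\<forall>a\<in>head \<sigma>. inst_atom h' a \<in> chase D \<Sigma>)"
    using chase.step[OF s b] by (intro exI[of _ "skolem_ext \<sigma> h"]) (auto simp: skolem_ext_def front_def exvars_def)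
qed

lemma answers_hom:
  assumes "cs \<in> answers q A" "\<forall>a\<in>A. inst_atom (G M) a \<in> M"
  shows "cs \<in> answers q M"
proof -
  obtain h where h: "length cs = length (ansvars q)" "\<forall>i<length cs. h (ansvars q ! i) = Const (cs ! i)"
     "\<forall>a\<in>qatoms q. inst_atom h a \<in> A" using assms(1) unfolding answers_def by blast
  show ?thesis unfolding answers_def
    using h assms(2) by (intro CollectI conjI exI[of _ "G M \<circ> h"]) (auto simp: inst_comp[symmetric])
qed

theorem mainTheorem3:
  fixes \<C> :: "('p, 'v) tgd set set"
    and D :: "('p, 'c, 'v) inst"
    and \<Sigma>hg \<Sigma>C :: "('p, 'v) tgd set"
    and q :: "('p, 'v) cq"
  assumes "\<forall>\<Sigma>\<in>\<C>. ontology \<Sigma>"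
    and "database D"
    and "ontology \<Sigma>hg" and "ontology \<Sigma>C"
    and "dyadic \<C> (\<Sigma>hg, \<Sigma>C)"
    and "wf_cq q"
  shows "cert q D (\<Sigma>hg \<union> \<Sigma>C) = cert q (D \<union> grAt D (\<Sigma>hg, \<Sigma>C)) \<Sigma>C"
proof -
  let ?S = "\<Sigma>hg \<union> \<Sigma>C"
  have hg: "head_ground \<Sigma>hg ?S" using assms(5) by (simp add: dyadic_def)
  have gc: "\<forall>a\<in>grAt D (\<Sigma>hg, \<Sigma>C). \<forall>t\<in>set (args a). \<exists>c. t = Const c"
    using hg_const[OF assms(2) hg] unfolding grAt_def by auto
  show ?thesis
  proof
    show "cert q D ?S \<subseteq> cert q (D \<union> grAt D (\<Sigma>hg, \<Sigma>C)) \<Sigma>C"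
    proof
      fix cs assume cs: "cs \<in> cert q D ?S"
      show "cs \<in> cert q (D \<union> grAt D (\<Sigma>hg, \<Sigma>C)) \<Sigma>C" unfolding cert_def
      proof (rule InterI)
        fix X assume "X \<in> {answers q M |M. is_model (D \<union> grAt D (\<Sigma>hg, \<Sigma>C)) \<Sigma>C M}"
        then obtain M where X: "X = answers q M" and M: "is_model (D \<union> grAt D (\<Sigma>hg, \<Sigma>C)) \<Sigma>C M" by blast
        have ca: "cs \<in> answers q (chase D ?S)" using cs chase_model unfolding cert_def by blast
        have T: "\<forall>\<sigma>\<in>\<Sigma>hg - \<Sigma>C. \<forall>h a. (\<forall>b\<in>body \<sigma>. inst_atom h b \<in> chase D ?S) \<and> a \<in> head \<sigma> \<longrightarrow>
          inst_atom (skolem_ext \<sigma> h) a \<in> M \<and> (\<forall>t\<in>set (args (inst_atom (skolem_ext \<sigma> h) a)). \<exists>c. t = Const c)"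
        proof (intro ballI allI impI)
          fix \<sigma> h a assume s: "\<sigma> \<in> \<Sigma>hg - \<Sigma>C" and ba: "(\<forall>b\<in>body \<sigma>. inst_atom h b \<in> chase D ?S) \<and> a \<in> head \<sigma>"
          have ic: "inst_atom (skolem_ext \<sigma> h) a \<in> chase D ?S" using chase.step[of \<sigma> ?S h D a] s ba by blast
          have "pred (inst_atom (skolem_ext \<sigma> h) a) \<in> hdpred \<Sigma>hg" using s ba
            unfolding hdpred_def by (auto simp: inst_atom_def)
          then have "inst_atom (skolem_ext \<sigma> h) a \<in> grAt D (\<Sigma>hg, \<Sigma>C)" using ic by (simp add: grAt_def)
          then show "inst_atom (skolem_ext \<sigma> h) a \<in> M \<and> (\<forall>t\<in>set (args (inst_atom (skolem_ext \<sigma> h) a)). \<exists>c. t = Const c)"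
            using M gc unfolding is_model_def by blast
        qed
        have "\<forall>a\<in>chase D ?S. inst_atom (G M) a \<in> M"
          using hom[OF assms(2) _ _ T] M unfolding is_model_def by (metis Diff_iff Un_iff le_supE)
        then show "cs \<in> X" using answers_hom[OF ca] X by blast
      qed
    qed
  next
    show "cert q (D \<union> grAt D (\<Sigma>hg, \<Sigma>C)) \<Sigma>C \<subseteq> cert q D ?S"
    proof
      fix cs assume cs: "cs \<in> cert q (D \<union> grAt D (\<Sigma>hg, \<Sigma>C)) \<Sigma>C"
      show "cs \<in> cert q D ?S" unfolding cert_def
      proof (rule InterI)
        fix X assume "X \<in> {answers q M |M. is_model D ?S M}"
        then obtain M where X: "X = answers q M" and M: "is_model D ?S M" by blast
        have ch: "\<forall>a\<in>chase D ?S. inst_atom (G M) a \<in> M"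
          using hom[OF assms(2), where M=M and T="{}" and \<Sigma>="?S"] M unfolding is_model_def by blast
        have "grAt D (\<Sigma>hg, \<Sigma>C) \<subseteq> M"
        proof
          fix a assume a: "a \<in> grAt D (\<Sigma>hg, \<Sigma>C)"
          then have "inst_atom (G M) a = a" by (intro G_const) (use a gc in blast)
          then show "a \<in> M" using ch a unfolding grAt_def by force
        qed
        then have "is_model (D \<union> grAt D (\<Sigma>hg, \<Sigma>C)) \<Sigma>C M" using M unfolding is_model_def by blast
        then show "cs \<in> X" using cs X unfolding cert_def by blast
      qed
    qed
  qed
qed

end
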